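(* Let $A$ be a finite set and let $\rho\subseteq A^n$, $n\ge3$, be an essential key relation preserved by a semilattice operation or by a 2-semilattice operation on $A$. Then the pattern of $\rho$ is either the trivial equivalence relation, or an equivalence relation in which exactly one class has two elements and all other classes are singletons.
   Context: A semilattice operation is a binary associative, commutative, idempotent operation. A 2-semilattice operation is a binary commutative idempotent operation $s$ satisfying $s(x,s(x,y))=s(x,y)$. An operation preserves $\rho$ if applying it coordinatewise to tuples of $\rho$ gives a tuple of $\rho$. A unary vector-function is a tuple $\Psi=(\psi_1,\dots,\psi_n)$ of maps $\psi_i:A\to A$ acting coordinatewise; it preserves $\rho$ if $\Psi(\rho)\subseteq\rho$. $\rho$ is a key relation if there is $\beta\in A^n\setminus\rho$ (a key tuple) such that every $\alpha\in A^n\setminus\rho$ is mapped to $\beta$ by some unary vector-function preserving $\rho$. $\rho$ is essential if it cannot be written as a conjunction of relations of smaller arities. The pattern of $\rho$: for $i\ne j$, $i\overset{\rho}{\sim}j$ iff there do NOT exist $a_1,\dots,a_n,b_i,b_j\in A$ with $(a_1,\dots,a_n)\notin\rho$ while the tuples obtained by replacing $a_i$ by $b_i$, replacing $a_j$ by $b_j$, and replacing both, all lie in $\rho$; and $i\overset{\rho}{\sim}i$ always. *)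

theory Defs
  imports Main
begin

definition tuples :: "'a set \<Rightarrow> nat \<Rightarrow> 'a list set" where
  "tuples A n = {t. length t = n \<and> set t \<subseteq> A}"

definition semilattice_op :: "'a set \<Rightarrow> ('a \<Rightarrow> 'a \<Rightarrow> 'a) \<Rightarrow> bool" where
  "semilattice_op A s \<longleftrightarrow>
     (\<forall>x\<in>A. \<forall>y\<in>A. s x y \<in> A) \<and>
     (\<forall>x\<in>A. \<forall>y\<in>A. \<forall>z\<in>A. s x (s y z) = s (s x y) z) \<and>
     (\<forall>x\<in>A. \<forall>y\<in>A. s x y = s y x) \<and>
     (\<forall>x\<in>A. s x x = x)"

definition two_semilattice_op :: "'a set \<Rightarrow> ('a \<Rightarrow> 'a \<Rightarrow> 'a) \<Rightarrow> bool" where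
  "two_semilattice_op A s \<longleftrightarrow>
     (\<forall>x\<in>A. \<forall>y\<in>A. s x y \<in> A) \<and>
     (\<forall>x\<in>A. \<forall>y\<in>A. s x y = s y x) \<and>
     (\<forall>x\<in>A. s x x = x) \<and>
     (\<forall>x\<in>A. \<forall>y\<in>A. s x (s x y) = s x y)"

definition preserves2 :: "('a \<Rightarrow> 'a \<Rightarrow> 'a) \<Rightarrow> 'a list set \<Rightarrow> bool" where
  "preserves2 s \<rho> \<longleftrightarrow> (\<forall>t\<in>\<rho>. \<forall>u\<in>\<rho>. map2 s t u \<in> \<rho>)"

definition apply_vf :: "(nat \<Rightarrow> 'a \<Rightarrow> 'a) \<Rightarrow> 'a list \<Rightarrow> 'a list" where
  "apply_vf \<Psi> t = map (\<lambda>i. \<Psi> i (t ! i)) [0..<length t]"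

definition key_relation :: "'a set \<Rightarrow> nat \<Rightarrow> 'a list set \<Rightarrow> bool" where
  "key_relation A n \<rho> \<longleftrightarrow>
     (\<exists>\<beta>\<in>tuples A n - \<rho>. \<forall>\<alpha>\<in>tuples A n - \<rho>.
        \<exists>\<Psi>. (\<forall>i<n. \<forall>x\<in>A. \<Psi> i x \<in> A) \<and>
             (\<forall>t\<in>\<rho>. apply_vf \<Psi> t \<in> \<rho>) \<and>
             apply_vf \<Psi> \<alpha> = \<beta>)"

text \<open>rho is essential: it is not a (finite) conjunction of relations of smaller arities,
  where each conjunct is a relation sigma of arity length v < n applied to the variables
  x_{v!0}, ..., x_{v!(length v - 1)} (repetitions allowed).\<close>
definition essential :: "'a set \<Rightarrow> nat \<Rightarrow> 'a list set \<Rightarrow> bool" where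
  "essential A n \<rho> \<longleftrightarrow>
     \<not> (\<exists>S :: (nat list \<times> 'a list set) set. finite S \<and>
          (\<forall>(v, \<sigma>)\<in>S. length v < n \<and> set v \<subseteq> {..<n}) \<and>
          \<rho> = {t \<in> tuples A n. \<forall>(v, \<sigma>)\<in>S. map ((!) t) v \<in> \<sigma>})"

definition pattern :: "'a set \<Rightarrow> nat \<Rightarrow> 'a list set \<Rightarrow> nat \<Rightarrow> nat \<Rightarrow> bool" where
  "pattern A n \<rho> i j \<longleftrightarrow> i = j \<or>
     \<not> (\<exists>a\<in>tuples A n. \<exists>bi\<in>A. \<exists>bj\<in>A. a \<notin> \<rho> \<and>
          a[i := bi] \<in> \<rho> \<and> a[j := bj] \<in> \<rho> \<and> a[i := bi, j := bj] \<in> \<rho>)"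

end

theory Submission
  imports Defs
begin

lemma tuplesD: "t \<in> tuples A n \<Longrightarrow> length t = n \<and> set t \<subseteq> A"
  by (simp add: tuples_def)

lemma tuples_nth: "t \<in> tuples A n \<Longrightarrow> m < n \<Longrightarrow> t ! m \<in> A"
  by (auto simp: tuples_def)

lemma tuples_upd: "t \<in> tuples A n \<Longrightarrow> x \<in> A \<Longrightarrow> t[i := x] \<in> tuples A n"
  by (auto simp: tuples_def dest: subsetD[OF set_update_subset_insert])

lemma apply_vf_length[simp]: "length (apply_vf \<Psi> t) = length t"
  by (simp add: apply_vf_def)

lemma apply_vf_nth[simp]: "m < length t \<Longrightarrow> apply_vf \<Psi> t ! m = \<Psi> m (t ! m)"
  by (simp add: apply_vf_def)

lemma pattern_sym: "pattern A n \<rho> i j \<Longrightarrow> pattern A n \<rho> j i"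
  unfolding pattern_def
  by (metis list_update_swap)

lemma pattern_refl[simp]: "pattern A n \<rho> i i"
  by (simp add: pattern_def)

lemma semi_two: "semilattice_op A s \<Longrightarrow> two_semilattice_op A s"
  unfolding semilattice_op_def two_semilattice_op_def by metis

locale ctx =
  fixes A :: "'a set" and n :: nat and \<rho> :: "'a list set" and s :: "'a \<Rightarrow> 'a \<Rightarrow> 'a"
  assumes rho_sub: "\<rho> \<subseteq> tuples A n"
    and cl: "\<And>x y. x \<in> A \<Longrightarrow> y \<in> A \<Longrightarrow> s x y \<in> A"
    and comm: "\<And>x y. x \<in> A \<Longrightarrow> y \<in> A \<Longrightarrow> s x y = s y x"
    and idem: "\<And>x. x \<in> A \<Longrightarrow> s x x = x"
    and absorb: "\<And>x y. x \<in> A \<Longrightarrow> y \<in> A \<Longrightarrow> s x (s x y) = s x y"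
    and pres: "preserves2 s \<rho>"
begin

lemma abs2: "x \<in> A \<Longrightarrow> y \<in> A \<Longrightarrow> s (s x y) x = s x y"
  by (metis absorb cl comm)
lemma abs3: "x \<in> A \<Longrightarrow> y \<in> A \<Longrightarrow> s y (s x y) = s x y"
  by (metis absorb comm)
lemma abs4: "x \<in> A \<Longrightarrow> y \<in> A \<Longrightarrow> s (s x y) y = s x y"
  by (metis abs3 cl comm)

lemmas salg = idem absorb abs2 abs3 abs4

lemma rho_tuples: "t \<in> \<rho> \<Longrightarrow> t \<in> tuples A n"
  using rho_sub by blast

lemma sprod: "t \<in> \<rho> \<Longrightarrow> u \<in> \<rho> \<Longrightarrow> map2 s t u \<in> \<rho>"
  using pres by (simp add: preserves2_def)

lemma map2_eqI:
  assumes "length t = length a" "length u = length a" "length r = length a"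
    "\<And>m. m < length a \<Longrightarrow> s (t!m) (u!m) = r!m"
  shows "map2 s t u = r"
  using assms by (intro nth_equalityI) auto

lemma sepE:
  assumes "pattern A n \<rho> i j" "i \<noteq> j" "a \<in> tuples A n" "a \<notin> \<rho>" "x \<in> A" "y \<in> A"
    "a[i := x] \<in> \<rho>" "a[j := y] \<in> \<rho>" "a[i := x, j := y] \<in> \<rho>"
  shows False
  using assms unfolding pattern_def by blast

lemma lemC:
  assumes pik: "pattern A n \<rho> i k" and d: "i \<noteq> j" "j \<noteq> k" "i \<noteq> k" "i < n" "j < n" "k < n"
    and b: "b \<in> tuples A n" and uA: "u \<in> A" "w \<in> A" "q \<in> A"
    and r: "b[i := u] \<in> \<rho>" "b[k := w] \<in> \<rho>" "b[j := q] \<in> \<rho>"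
  shows "b[j := s (b!j) q] \<in> \<rho>"
proof (rule ccontr)
  assume ng: "b[j := s (b!j) q] \<notin> \<rho>"
  have lb: "length b = n" using b tuplesD by blast
  have bA: "\<And>m. m < n \<Longrightarrow> b!m \<in> A" using b tuples_nth by blast
  define g where "g = b[j := s (b!j) q]"
  have g: "g \<in> tuples A n" unfolding g_def by (rule tuples_upd[OF b]) (simp add: cl bA d uA)
  have P1: "map2 s (b[i := u]) (b[j := q]) = g[i := s u (b!i)]"
  proof (rule map2_eqI[where a=b])
    fix m assume m: "m < length b"
    show "s (b[i := u] ! m) (b[j := q] ! m) = g[i := s u (b!i)] ! m"
      unfolding g_def using d lb bA[of m] m uA comm[of u "b!i"]
      by (cases "m = i"; cases "m = j") (simp_all add: idem)
  qed (use lb g_def in auto)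
  have P2: "map2 s (b[j := q]) (b[k := w]) = g[k := s (b!k) w]"
  proof (rule map2_eqI[where a=b])
    fix m assume m: "m < length b"
    show "s (b[j := q] ! m) (b[k := w] ! m) = g[k := s (b!k) w] ! m"
      unfolding g_def using d lb bA[of m] m uA comm[of q "b!j"]
      by (cases "m = j"; cases "m = k") (simp_all add: idem)
  qed (use lb g_def in auto)
  have P3: "map2 s (g[i := s u (b!i)]) (g[k := s (b!k) w]) = g[i := s u (b!i), k := s (b!k) w]"
  proof (rule map2_eqI[where a=b])
    fix m assume m: "m < length b"
    show "s (g[i := s u (b!i)] ! m) (g[k := s (b!k) w] ! m) = g[i := s u (b!i), k := s (b!k) w] ! m"
      unfolding g_def using d lb bA[of m] m uA bA[of i] bA[of j] bA[of k] cl
      by (cases "m = i"; cases "m = j"; cases "m = k") (simp_all add: idem abs2 abs3 abs4 absorb)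
  qed (use lb g_def in auto)
  have m1: "g[i := s u (b!i)] \<in> \<rho>" using P1 sprod r by metis
  have m2: "g[k := s (b!k) w] \<in> \<rho>" using P2 sprod r by metis
  have m3: "g[i := s u (b!i), k := s (b!k) w] \<in> \<rho>" using P3 sprod m1 m2 by metis
  show False
    by (rule sepE[OF pik d(3) g ng[folded g_def] _ _ m1 m2 m3]) (use bA d uA cl in auto)
qed

lemma lemL1:
  assumes pij: "pattern A n \<rho> i j" and pik: "pattern A n \<rho> i k"
    and d: "i \<noteq> j" "j \<noteq> k" "i \<noteq> k" "i < n" "j < n" "k < n"
    and a: "a \<in> tuples A n" "a \<notin> \<rho>" and xA: "x \<in> A" "y \<in> A" "z \<in> A"
    and r: "a[i := x] \<in> \<rho>" "a[i := s (a!i) x] \<in> \<rho>" "a[j := y] \<in> \<rho>" "a[k := z] \<in> \<rho>"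
  shows False
proof -
  have lb: "length a = n" using a tuplesD by blast
  have bA: "\<And>m. m < n \<Longrightarrow> a!m \<in> A" using a tuples_nth by blast
  have y1: "a[j := s (a!j) y] \<in> \<rho>"
    by (rule lemC[OF pik d(1) d(2) d(3) d(4) d(5) d(6) a(1) xA(1) xA(3) xA(2) r(1) r(4) r(3)])
  have P: "map2 s (a[i := x]) (a[j := y]) = a[i := s (a!i) x, j := s (a!j) y]"
  proof (rule map2_eqI[where a=a])
    fix m assume m: "m < length a"
    show "s (a[i := x] ! m) (a[j := y] ! m) = a[i := s (a!i) x, j := s (a!j) y] ! m"
      using d lb bA[of m] m xA comm[of x "a!i"] bA[of i]
      by (cases "m = i"; cases "m = j") (simp_all add: idem)
  qed (use lb in auto)
  have m3: "a[i := s (a!i) x, j := s (a!j) y] \<in> \<rho>" using P sprod r by metis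
  show False
    by (rule sepE[OF pij d(1) a _ _ r(2) y1 m3]) (use bA d xA cl in auto)
qed

lemma lemDisj:
  assumes pij: "pattern A n \<rho> i j" and pkl: "pattern A n \<rho> k l"
    and d: "i \<noteq> j" "i \<noteq> k" "i \<noteq> l" "j \<noteq> k" "j \<noteq> l" "k \<noteq> l" "i < n" "j < n" "k < n" "l < n"
    and b: "b \<in> tuples A n" "b \<notin> \<rho>"
    and T: "\<And>m. m < n \<Longrightarrow> \<exists>t\<in>A. b[m := t] \<in> \<rho>"
  shows False
proof -
  have lb: "length b = n" using b tuplesD by blast
  have bA: "\<And>m. m < n \<Longrightarrow> b!m \<in> A" using b tuples_nth by blast
  obtain ti where ti: "ti \<in> A" "b[i := ti] \<in> \<rho>" using T d by blast
  obtain tj where tj: "tj \<in> A" "b[j := tj] \<in> \<rho>" using T d by blast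
  obtain tk where tk: "tk \<in> A" "b[k := tk] \<in> \<rho>" using T d by blast
  obtain tl where tl: "tl \<in> A" "b[l := tl] \<in> \<rho>" using T d by blast
  have k1: "b[k := s (b!k) tk] \<in> \<rho>"
    by (rule lemC[of i j k]) (use pij d b ti tj tk in auto)
  have l1: "b[l := s (b!l) tl] \<in> \<rho>"
    by (rule lemC[of i j l]) (use pij d b ti tj tl in auto)
  have P: "map2 s (b[k := tk]) (b[l := tl]) = b[k := s (b!k) tk, l := s (b!l) tl]"
  proof (rule map2_eqI[where a=b])
    fix m assume m: "m < length b"
    show "s (b[k := tk] ! m) (b[l := tl] ! m) = b[k := s (b!k) tk, l := s (b!l) tl] ! m"
      using d lb bA[of m] m tk tl comm[of tk "b!k"] bA[of k]
      by (cases "m = k"; cases "m = l") (simp_all add: idem)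
  qed (use lb in auto)
  have m3: "b[k := s (b!k) tk, l := s (b!l) tl] \<in> \<rho>" using P sprod tk tl by metis
  show False
    by (rule sepE[OF pkl d(6) b _ _ k1 l1 m3]) (use bA d tk tl cl in auto)
qed

lemma lemShared:
  assumes pij: "pattern A n \<rho> i j" and pik: "pattern A n \<rho> i k"
    and d: "i \<noteq> j" "j \<noteq> k" "i \<noteq> k" "i < n" "j < n" "k < n"
    and b: "b \<in> tuples A n" "b \<notin> \<rho>"
    and key: "\<forall>\<alpha>\<in>tuples A n - \<rho>. \<exists>\<Psi>. (\<forall>i<n. \<forall>x\<in>A. \<Psi> i x \<in> A) \<and>
             (\<forall>t\<in>\<rho>. apply_vf \<Psi> t \<in> \<rho>) \<and> apply_vf \<Psi> \<alpha> = b"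
    and T: "\<And>m. m < n \<Longrightarrow> \<exists>t\<in>A. b[m := t] \<in> \<rho>"
  shows False
proof -
  have lb: "length b = n" using b tuplesD by blast
  have bA: "\<And>m. m < n \<Longrightarrow> b!m \<in> A" using b tuples_nth by blast
  obtain u where u: "u \<in> A" "b[i := u] \<in> \<rho>" using T d by blast
  obtain v where v: "v \<in> A" "b[j := v] \<in> \<rho>" using T d by blast
  obtain w where w: "w \<in> A" "b[k := w] \<in> \<rho>" using T d by blast
  define th where "th = b[i := u, j := v]"
  have th: "th \<in> tuples A n" unfolding th_def
    by (intro tuples_upd b u v)
  have thn: "th \<notin> \<rho>"
  proof
    assume "th \<in> \<rho>"
    then show False using sepE[OF pij d(1) b u(1) v(1) u(2) v(2)] th_def by blast
  qed
  obtain \<Psi> where PA: "\<forall>i<n. \<forall>x\<in>A. \<Psi> i x \<in> A" and Pp: "\<forall>t\<in>\<rho>. apply_vf \<Psi> t \<in> \<rho>"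
    and Pth: "apply_vf \<Psi> th = b"
    using key th thn by blast
  have lth: "length th = n" using th tuplesD by blast
  have Pm: "\<And>m. m < n \<Longrightarrow> \<Psi> m (th ! m) = b ! m"
    using Pth lth by (metis apply_vf_nth)
  have Pi: "\<Psi> i u = b ! i" using Pm[of i] d lb unfolding th_def by simp
  have Pj: "\<Psi> j v = b ! j" using Pm[of j] d lb unfolding th_def by simp
  have Po: "\<And>m. m < n \<Longrightarrow> m \<noteq> i \<Longrightarrow> m \<noteq> j \<Longrightarrow> \<Psi> m (b ! m) = b ! m"
  proof -
    fix m assume "m < n" "m \<noteq> i" "m \<noteq> j"
    then show "\<Psi> m (b ! m) = b ! m" using Pm[of m] by (simp add: th_def)
  qed
  define c where "c = \<Psi> i (b!i)"
  define q where "q = \<Psi> j (b!j)"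
  define w' where "w' = \<Psi> k w"
  have cA: "c \<in> A" unfolding c_def using PA bA d by blast
  have qA: "q \<in> A" unfolding q_def using PA bA d by blast
  have wA: "w' \<in> A" unfolding w'_def using PA w d by blast
  have e1: "apply_vf \<Psi> (b[j := v]) = b[i := c]"
    by (rule nth_equalityI) (use lb d Pj Po in \<open>auto simp: nth_list_update c_def\<close>)
  have hc: "b[i := c] \<in> \<rho>" using e1 Pp v by metis
  have e2: "apply_vf \<Psi> (b[i := u]) = b[j := q]"
    by (rule nth_equalityI) (use lb d Pi Po in \<open>auto simp: nth_list_update q_def\<close>)
  have hq: "b[j := q] \<in> \<rho>" using e2 Pp u by metis
  have e3: "apply_vf \<Psi> (b[k := w]) = b[i := c, j := q, k := w']"
    by (rule nth_equalityI) (use lb d Po in \<open>auto simp: nth_list_update c_def q_def w'_def\<close>)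
  have hw: "b[i := c, j := q, k := w'] \<in> \<rho>" using e3 Pp w by metis
  define qs where "qs = s (b!j) q"
  have qsA: "qs \<in> A" unfolding qs_def using cl bA qA d by blast
  have hqs: "b[j := qs] \<in> \<rho>" unfolding qs_def
    by (rule lemC[of i k j]) (use pik d b u w qA hq in auto)
  define e where "e = s w' (b!k)"
  have eA: "e \<in> A" unfolding e_def using cl bA wA d by blast
  have PX: "map2 s (b[i := c, j := q, k := w']) (b[i := c]) = b[i := c, j := qs, k := e]"
  proof (rule map2_eqI[where a=b])
    fix m assume m: "m < length b"
    show "s (b[i := c, j := q, k := w'] ! m) (b[i := c] ! m) = b[i := c, j := qs, k := e] ! m"
      unfolding qs_def e_def
      using d lb bA[of m] m cA qA comm[of q "b!j"] bA[of j]
      by (cases "m = i"; cases "m = j"; cases "m = k") (simp_all add: idem)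
  qed (use lb in auto)
  have hX: "b[i := c, j := qs, k := e] \<in> \<rho>" using PX sprod hw hc by metis
  have PY: "map2 s (b[i := c]) (b[j := q]) = b[i := s c (b!i), j := qs]"
  proof (rule map2_eqI[where a=b])
    fix m assume m: "m < length b"
    show "s (b[i := c] ! m) (b[j := q] ! m) = b[i := s c (b!i), j := qs] ! m"
      unfolding qs_def
      using d lb bA[of m] m cA qA
      by (cases "m = i"; cases "m = j") (simp_all add: idem)
  qed (use lb in auto)
  have hY: "b[i := s c (b!i), j := qs] \<in> \<rho>" using PY sprod hc hq by metis
  define al where "al = b[i := c, j := qs]"
  have al: "al \<in> tuples A n" unfolding al_def by (intro tuples_upd b cA qsA)
  have aln: "al \<notin> \<rho>"
  proof
    assume "al \<in> \<rho>"
    then show False using sepE[OF pij d(1) b(1) b(2) cA qsA hc hqs] al_def by blast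
  qed
  have r1: "al[i := b!i] \<in> \<rho>"
  proof -
    have "al[i := b!i] = b[j := qs]" unfolding al_def
      by (rule nth_equalityI) (use lb d in \<open>auto simp: nth_list_update\<close>)
    then show ?thesis using hqs by simp
  qed
  have r2: "al[i := s (al!i) (b!i)] \<in> \<rho>"
  proof -
    have "al[i := s (al!i) (b!i)] = b[i := s c (b!i), j := qs]" unfolding al_def
      by (rule nth_equalityI) (use lb d in \<open>auto simp: nth_list_update\<close>)
    then show ?thesis using hY by simp
  qed
  have r3: "al[j := b!j] \<in> \<rho>"
  proof -
    have "al[j := b!j] = b[i := c]" unfolding al_def
      by (rule nth_equalityI) (use lb d in \<open>auto simp: nth_list_update\<close>)
    then show ?thesis using hc by simp
  qed
  have r4: "al[k := e] \<in> \<rho>"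
  proof -
    have "al[k := e] = b[i := c, j := qs, k := e]" unfolding al_def by simp
    then show ?thesis using hX by simp
  qed
  show False
    by (rule lemL1[OF pij pik d al aln bA[OF d(4)] bA[OF d(5)] eA r1 r2 r3 r4])
qed

end


lemma ess_wit:
  assumes ess: "essential A n \<rho>" and sub: "\<rho> \<subseteq> tuples A n"
  shows "\<exists>a\<in>tuples A n. a \<notin> \<rho> \<and> (\<forall>m<n. \<exists>b\<in>A. a[m := b] \<in> \<rho>)"
proof (rule ccontr)
  assume H: "\<not> ?thesis"
  define dl :: "nat \<Rightarrow> nat list" where "dl m = filter (\<lambda>x. x \<noteq> m) [0..<n]" for m
  define S where "S = (\<lambda>m. (dl m, {map ((!) t) (dl m) | t. t \<in> \<rho>})) ` {..<n}"
  have fin: "finite S" unfolding S_def by simp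
  have len: "\<forall>(v, \<sigma>)\<in>S. length v < n \<and> set v \<subseteq> {..<n}"
  proof
    fix x assume "x \<in> S"
    then obtain m where m: "m < n" "x = (dl m, {map ((!) t) (dl m) | t. t \<in> \<rho>})"
      unfolding S_def by auto
    have "length (dl m) < length [0..<n]" unfolding dl_def
      by (rule length_filter_less) (use m in auto)
    then show "case x of (v, \<sigma>) \<Rightarrow> length v < n \<and> set v \<subseteq> {..<n}"
      using m by (auto simp: dl_def)
  qed
  have eq: "\<rho> = {t \<in> tuples A n. \<forall>(v, \<sigma>)\<in>S. map ((!) t) v \<in> \<sigma>}"
  proof
    show "\<rho> \<subseteq> {t \<in> tuples A n. \<forall>(v, \<sigma>)\<in>S. map ((!) t) v \<in> \<sigma>}"
      using sub unfolding S_def by auto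
  next
    show "{t \<in> tuples A n. \<forall>(v, \<sigma>)\<in>S. map ((!) t) v \<in> \<sigma>} \<subseteq> \<rho>"
    proof
      fix t assume t: "t \<in> {t \<in> tuples A n. \<forall>(v, \<sigma>)\<in>S. map ((!) t) v \<in> \<sigma>}"
      show "t \<in> \<rho>"
      proof (rule ccontr)
        assume tn: "t \<notin> \<rho>"
        have tt: "t \<in> tuples A n" using t by blast
        obtain m where m: "m < n" "\<forall>b\<in>A. t[m := b] \<notin> \<rho>" using H tt tn by blast
        have "(dl m, {map ((!) t) (dl m) | t. t \<in> \<rho>}) \<in> S" unfolding S_def using m by blast
        moreover have tS: "\<forall>(v, \<sigma>)\<in>S. map ((!) t) v \<in> \<sigma>" using t by simp
        ultimately have "map ((!) t) (dl m) \<in> {map ((!) t) (dl m) | t. t \<in> \<rho>}"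
          by (metis (no_types, lifting) case_prodD)
        then obtain t' where t': "t' \<in> \<rho>" "map ((!) t) (dl m) = map ((!) t') (dl m)" by blast
        have t'T: "t' \<in> tuples A n" using t' sub by blast
        have lt: "length t = n" "length t' = n" using tt t'T by (auto simp: tuples_def)
        have "t[m := t' ! m] = t'"
        proof (rule nth_equalityI)
          show "length (t[m := t' ! m]) = length t'" using lt by simp
        next
          fix p assume p: "p < length (t[m := t' ! m])"
          show "t[m := t' ! m] ! p = t' ! p"
          proof (cases "p = m")
            case True then show ?thesis using p by simp
          next
            case False
            then have "p \<in> set (dl m)" using p lt by (auto simp: dl_def)
            then have "t ! p = t' ! p" using t'(2) by (metis map_eq_conv)
            then show ?thesis using False by simp
          qed
        qed
        moreover have "t' ! m \<in> A" using t'T m(1) by (auto simp: tuples_def)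
        ultimately show False using m(2) t'(1) by metis
      qed
    qed
  qed
  have ex: "\<exists>S :: (nat list \<times> 'a list set) set. finite S \<and>
          (\<forall>(v, \<sigma>)\<in>S. length v < n \<and> set v \<subseteq> {..<n}) \<and>
          \<rho> = {t \<in> tuples A n. \<forall>(v, \<sigma>)\<in>S. map ((!) t) v \<in> \<sigma>}"
    by (rule exI[of _ S]) (intro conjI fin len eq)
  show False using ess ex unfolding essential_def by (rule notE)
qed


theorem mainTheorem10:
  fixes A :: "'a set" and n :: nat and \<rho> :: "'a list set" and s :: "'a \<Rightarrow> 'a \<Rightarrow> 'a"
  assumes "finite A"
    and "n \<ge> 3"
    and "\<rho> \<subseteq> tuples A n"
    and "essential A n \<rho>"
    and "key_relation A n \<rho>"
    and "semilattice_op A s \<or> two_semilattice_op A s"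
    and "preserves2 s \<rho>"
  shows "(\<forall>i<n. \<forall>j<n. pattern A n \<rho> i j \<longleftrightarrow> i = j) \<or>
         (\<exists>k<n. \<exists>l<n. k \<noteq> l \<and>
            (\<forall>i<n. \<forall>j<n. pattern A n \<rho> i j \<longleftrightarrow> (i = j \<or> {i, j} = {k, l})))"
proof -
  have two: "two_semilattice_op A s" using assms(6) semi_two by blast
  interpret ctx A n \<rho> s
    by unfold_locales (use assms(3,7) two in \<open>auto simp: two_semilattice_op_def\<close>)
  obtain b where b: "b \<in> tuples A n - \<rho>" and key: "\<forall>\<alpha>\<in>tuples A n - \<rho>.
        \<exists>\<Psi>. (\<forall>i<n. \<forall>x\<in>A. \<Psi> i x \<in> A) \<and>
             (\<forall>t\<in>\<rho>. apply_vf \<Psi> t \<in> \<rho>) \<and>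
             apply_vf \<Psi> \<alpha> = b"
    using assms(5) unfolding key_relation_def by blast
  have bt: "b \<in> tuples A n" and bn: "b \<notin> \<rho>" using b by auto
  obtain a where a: "a \<in> tuples A n" "a \<notin> \<rho>" and aw: "\<forall>m<n. \<exists>c\<in>A. a[m := c] \<in> \<rho>"
    using ess_wit[OF assms(4,3)] by blast
  obtain \<Psi> where PA: "\<forall>i<n. \<forall>x\<in>A. \<Psi> i x \<in> A" and Pp: "\<forall>t\<in>\<rho>. apply_vf \<Psi> t \<in> \<rho>"
    and Pa: "apply_vf \<Psi> a = b"
    using key a by blast
  have la: "length a = n" using a tuplesD by blast
  have T: "\<And>m. m < n \<Longrightarrow> \<exists>t\<in>A. b[m := t] \<in> \<rho>"
  proof -
    fix m assume m: "m < n"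
    obtain c where c: "c \<in> A" "a[m := c] \<in> \<rho>" using aw m by blast
    have "apply_vf \<Psi> (a[m := c]) = b[m := \<Psi> m c]"
    proof (rule nth_equalityI)
      show "length (apply_vf \<Psi> (a[m := c])) = length (b[m := \<Psi> m c])"
        using la Pa by (metis apply_vf_length length_list_update)
    next
      fix p assume p: "p < length (apply_vf \<Psi> (a[m := c]))"
      then have pn: "p < n" using la by simp
      have "apply_vf \<Psi> a ! p = \<Psi> p (a ! p)" using pn la by simp
      then show "apply_vf \<Psi> (a[m := c]) ! p = b[m := \<Psi> m c] ! p"
        using pn la Pa m by (auto simp: nth_list_update)
    qed
    then have "b[m := \<Psi> m c] \<in> \<rho>" using Pp c by metis
    moreover have "\<Psi> m c \<in> A" using PA m c by blast
    ultimately show "\<exists>t\<in>A. b[m := t] \<in> \<rho>" by blast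
  qed
  have shared: "\<And>i j k. pattern A n \<rho> i j \<Longrightarrow> pattern A n \<rho> i k \<Longrightarrow> i \<noteq> j \<Longrightarrow> j \<noteq> k \<Longrightarrow>
      i \<noteq> k \<Longrightarrow> i < n \<Longrightarrow> j < n \<Longrightarrow> k < n \<Longrightarrow> False"
  proof -
    fix i j k assume h: "pattern A n \<rho> i j" "pattern A n \<rho> i k" "i \<noteq> j" "j \<noteq> k"
      "i \<noteq> k" "i < n" "j < n" "k < n"
    show False using lemShared[OF h bt bn key T] .
  qed
  have uniq: "\<And>i j k l. i < n \<Longrightarrow> j < n \<Longrightarrow> k < n \<Longrightarrow> l < n \<Longrightarrow> i \<noteq> j \<Longrightarrow> k \<noteq> l \<Longrightarrow>
      pattern A n \<rho> i j \<Longrightarrow> pattern A n \<rho> k l \<Longrightarrow> {i, j} = {k, l}"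
  proof (rule ccontr)
    fix i j k l assume d: "i < n" "j < n" "k < n" "l < n" "i \<noteq> j" "k \<noteq> l"
      and p1: "pattern A n \<rho> i j" and p2: "pattern A n \<rho> k l" and ne: "{i, j} \<noteq> {k, l}"
    have p1': "pattern A n \<rho> j i" and p2': "pattern A n \<rho> l k" using pattern_sym[OF p1] pattern_sym[OF p2] by auto
    show False
    proof (cases "i = k")
      case True then show ?thesis using shared[OF p1, of l] p2 d ne by auto
    next
      case ik: False
      show ?thesis
      proof (cases "i = l")
        case True then show ?thesis using shared[OF p1, of k] p2' d ne ik by auto
      next
        case il: False
        show ?thesis
        proof (cases "j = k")
          case True then show ?thesis using shared[OF p1', of l] p2 d ne by auto
        next
          case jk: False
          show ?thesis
          proof (cases "j = l")
            case True then show ?thesis using shared[OF p1', of k] p2' d ne by auto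
          next
            case jl: False
            show ?thesis by (rule lemDisj[OF p1 p2 _ _ _ _ _ _ _ _ _ _ bt bn T]) (use d ik il jk jl in auto)
          qed
        qed
      qed
    qed
  qed
  show ?thesis
  proof (cases "\<exists>k<n. \<exists>l<n. k \<noteq> l \<and> pattern A n \<rho> k l")
    case False
    have "\<forall>i<n. \<forall>j<n. pattern A n \<rho> i j \<longleftrightarrow> i = j"
    proof (intro allI impI iffI)
      fix i j assume "i < n" "j < n" "pattern A n \<rho> i j"
      then show "i = j" using False by blast
    next
      fix i j :: nat assume "i = j"
      then show "pattern A n \<rho> i j" by (simp add: pattern_def)
    qed
    then show ?thesis by blast
  next
    case True
    then obtain k l where kl: "k < n" "l < n" "k \<noteq> l" "pattern A n \<rho> k l" by blast
    have "\<forall>i<n. \<forall>j<n. pattern A n \<rho> i j \<longleftrightarrow> (i = j \<or> {i, j} = {k, l})"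
    proof (intro allI impI iffI)
      fix i j assume "i < n" "j < n" "pattern A n \<rho> i j"
      then show "i = j \<or> {i, j} = {k, l}" using uniq[of i j k l] kl by blast
    next
      fix i j assume "i < n" "j < n" "i = j \<or> {i, j} = {k, l}"
      then consider "i = j" | "i = k \<and> j = l" | "i = l \<and> j = k" by (auto simp: doubleton_eq_iff)
      then show "pattern A n \<rho> i j"
        by cases (use kl pattern_sym[OF kl(4)] in \<open>auto\<close>)
    qed
    then show ?thesis using kl by blast
  qed
qed

end
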